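(* Let $L\subseteq\mathbb{Z}^{(\mathbb{N})}$ be a $\mathrm{Sym}$-invariant lattice. For $\mathbf{u}=(u_i)_{i\in\mathbb{N}}\in\mathbb{Z}^{(\mathbb{N})}$ set $s(\mathbf{u})=\sum_{i\in\mathbb{N}}u_i$, and let $s_L=\gcd(s(\mathbf{u})\mid\mathbf{u}\in L)$. Then (i) $s_L\mathbf{e}_1\in L$; (ii) if there exists $\mathbf{u}\in L$ with $s(\mathbf{u})\neq0$, then $s_L\mathbf{e}_1$ belongs to the Graver basis of $L$.
   Context: $\mathbb{N}=\{1,2,\dots\}$. $\mathbb{Z}^{(\mathbb{N})}$ is the group of finitely supported integer sequences with standard basis $\mathbf{e}_i$; a lattice is a subgroup. $\mathrm{Sym}$ is the group of permutations of $\mathbb{N}$ fixing all but finitely many points, acting by $\sigma(\mathbf{e}_i)=\mathbf{e}_{\sigma(i)}$; $L$ is $\mathrm{Sym}$-invariant if $\sigma(L)\subseteq L$ for all $\sigma$. $\mathbf{u}\sqsubseteq\mathbf{v}$ iff $u_iv_i\ge0$ and $|u_i|\le|v_i|$ for all $i$; the Graver basis of $L$ is the set of $\sqsubseteq$-minimal elements of $L\setminus\{\mathbf{0}\}$. *)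

theory Defs
  imports Main
begin

text \<open>Elements of Z^(N) with N = {1,2,...}: integer sequences indexed by nat,
  finitely supported, with the unused index 0 forced to be 0.\<close>
definition ZN :: "(nat \<Rightarrow> int) set" where
  "ZN = {u. finite {i. u i \<noteq> 0} \<and> u 0 = 0}"

definition unitvec :: "nat \<Rightarrow> nat \<Rightarrow> int" ("\<e>") where
  "\<e> i = (\<lambda>j. if j = i then 1 else 0)"

definition lattice :: "(nat \<Rightarrow> int) set \<Rightarrow> bool" where
  "lattice L \<longleftrightarrow> L \<subseteq> ZN \<and> (\<lambda>_. 0) \<in> L \<and>
     (\<forall>u\<in>L. \<forall>v\<in>L. (\<lambda>i. u i + v i) \<in> L) \<and> (\<forall>u\<in>L. (\<lambda>i. - u i) \<in> L)"

definition Sym :: "(nat \<Rightarrow> nat) set" where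
  "Sym = {\<sigma>. bij \<sigma> \<and> finite {i. \<sigma> i \<noteq> i} \<and> \<sigma> 0 = 0}"

text \<open>Action sigma(e_i) = e_(sigma i), extended linearly: (sigma u)_(sigma i) = u_i.\<close>
definition perm_act :: "(nat \<Rightarrow> nat) \<Rightarrow> (nat \<Rightarrow> int) \<Rightarrow> (nat \<Rightarrow> int)" where
  "perm_act \<sigma> u = (\<lambda>j. u (inv \<sigma> j))"

definition Sym_invariant :: "(nat \<Rightarrow> int) set \<Rightarrow> bool" where
  "Sym_invariant L \<longleftrightarrow> (\<forall>\<sigma>\<in>Sym. perm_act \<sigma> ` L \<subseteq> L)"

definition conf_le :: "(nat \<Rightarrow> int) \<Rightarrow> (nat \<Rightarrow> int) \<Rightarrow> bool" (infix "\<sqsubseteq>" 50) where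
  "u \<sqsubseteq> v \<longleftrightarrow> (\<forall>i. u i * v i \<ge> 0 \<and> \<bar>u i\<bar> \<le> \<bar>v i\<bar>)"

definition graver_basis :: "(nat \<Rightarrow> int) set \<Rightarrow> (nat \<Rightarrow> int) set" where
  "graver_basis L = {u \<in> L - {\<lambda>_. 0}. \<forall>v \<in> L - {\<lambda>_. 0}. v \<sqsubseteq> u \<longrightarrow> v = u}"

definition coord_sum :: "(nat \<Rightarrow> int) \<Rightarrow> int" where
  "coord_sum u = (\<Sum>i\<in>{i. u i \<noteq> 0}. u i)"

definition s_lat :: "(nat \<Rightarrow> int) set \<Rightarrow> int" where
  "s_lat L = Gcd (coord_sum ` L)"

end

theory Submission
  imports Defs
begin

definition sw :: "nat \<Rightarrow> nat \<Rightarrow> nat \<Rightarrow> nat" where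
  "sw a b = (\<lambda>x. if x = a then b else if x = b then a else x)"

lemma sw_sw[simp]: "sw a b (sw a b x) = x"
  by (simp add: sw_def)

lemma sw_inv: "inv (sw a b) = sw a b"
  by (rule inv_equality) simp_all

lemma sw_Sym: "a \<noteq> 0 \<Longrightarrow> b \<noteq> 0 \<Longrightarrow> sw a b \<in> Sym"
proof -
  assume "a \<noteq> 0" "b \<noteq> 0"
  have "bij (sw a b)"
    by (rule o_bij[of "sw a b"]) (simp_all add: fun_eq_iff)
  moreover have "finite {i. sw a b i \<noteq> i}"
    by (rule finite_subset[of _ "{a,b}"]) (auto simp: sw_def)
  moreover have "sw a b 0 = 0" using \<open>a \<noteq> 0\<close> \<open>b \<noteq> 0\<close> by (simp add: sw_def)
  ultimately show ?thesis unfolding Sym_def by blast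
qed

lemma swap_in:
  assumes "Sym_invariant L" "a \<noteq> 0" "b \<noteq> 0" "u \<in> L"
  shows "(\<lambda>j. u (sw a b j)) \<in> L"
proof -
  have "perm_act (sw a b) u \<in> L" using assms sw_Sym[OF assms(2,3)]
    unfolding Sym_invariant_def by blast
  then show ?thesis by (simp add: perm_act_def sw_inv)
qed

lemma lat_add: "lattice L \<Longrightarrow> u \<in> L \<Longrightarrow> v \<in> L \<Longrightarrow> (\<lambda>i. u i + v i) \<in> L"
  unfolding lattice_def by (elim conjE) (drule bspec, assumption, drule bspec, assumption)

lemma lat_neg: "lattice L \<Longrightarrow> u \<in> L \<Longrightarrow> (\<lambda>i. - u i) \<in> L"
  unfolding lattice_def by (elim conjE) (drule bspec, assumption)

lemma lat_zero: "lattice L \<Longrightarrow> (\<lambda>_. 0) \<in> L"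
  unfolding lattice_def by (elim conjE)

lemma lat_diff:
  assumes "lattice L" "u \<in> L" "v \<in> L"
  shows "(\<lambda>i. u i - v i) \<in> L"
proof -
  have "(\<lambda>i. - v i) \<in> L" using assms lat_neg by blast
  from lat_add[OF assms(1,2) this] have "(\<lambda>i. u i + (\<lambda>i. - v i) i) \<in> L" .
  then show ?thesis by simp
qed

lemma inZN: "lattice L \<Longrightarrow> u \<in> L \<Longrightarrow> u \<in> ZN"
  unfolding lattice_def by (elim conjE) (erule subsetD)

lemma finite_supp: "lattice L \<Longrightarrow> u \<in> L \<Longrightarrow> finite {i. u i \<noteq> 0}"
  using inZN unfolding ZN_def by simp

lemma coord_sum_eq: "finite S \<Longrightarrow> {i. u i \<noteq> 0} \<subseteq> S \<Longrightarrow> coord_sum u = sum u S"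
  unfolding coord_sum_def by (rule sum.mono_neutral_left) auto

lemma step:
  assumes L: "lattice L" "Sym_invariant L" and u: "u \<in> L" and k: "k \<noteq> 0" "k \<noteq> 1"
  shows "(\<lambda>i. u i - u k * (\<e> k i - \<e> 1 i)) \<in> L"
proof -
  have fin: "finite ({i. u i \<noteq> 0} \<union> {0,1,k})" using finite_supp[OF L(1) u] by simp
  obtain m where m: "m \<notin> {i. u i \<noteq> 0} \<union> {0,1,k}"
    using ex_new_if_finite[OF infinite_UNIV_nat fin] by blast
  have z: "(\<lambda>i. u i - u (sw k m i)) \<in> L"
    by (rule lat_diff[OF L(1) u swap_in[OF L(2) k(1) _ u]]) (use m in auto)
  have "(\<lambda>j. (\<lambda>i. u i - u (sw k m i)) (sw m 1 j)) \<in> L"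
    by (rule swap_in[OF L(2) _ _ z]) (use m in auto)
  moreover have "(\<lambda>j. (\<lambda>i. u i - u (sw k m i)) (sw m 1 j)) = (\<lambda>i. u k * (\<e> k i - \<e> 1 i))"
  proof (rule ext)
    fix i show "(\<lambda>i. u i - u (sw k m i)) (sw m 1 i) = u k * (\<e> k i - \<e> 1 i)"
      using m k by (cases "i = k"; cases "i = m"; cases "i = 1") (simp_all add: sw_def unitvec_def)
  qed
  ultimately have "(\<lambda>i. u k * (\<e> k i - \<e> 1 i)) \<in> L" by simp
  from lat_diff[OF L(1) u this] show ?thesis .
qed

lemma main_ind:
  assumes L: "lattice L" "Sym_invariant L"
  shows "u \<in> L \<Longrightarrow> card {i. u i \<noteq> 0 \<and> i \<noteq> 1} = n \<Longrightarrow> (\<lambda>i. coord_sum u * \<e> 1 i) \<in> L"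
proof (induction n arbitrary: u rule: less_induct)
  case (less n u)
  have fin: "finite {i. u i \<noteq> 0 \<and> i \<noteq> 1}"
    using finite_supp[OF L(1) less.prems(1)] by (rule finite_subset[rotated]) auto
  show ?case
  proof (cases "n = 0")
    case True
    then have e: "{i. u i \<noteq> 0 \<and> i \<noteq> 1} = {}" using fin less.prems(2) by simp
    have "coord_sum u = sum u {1}" by (rule coord_sum_eq) (use e in auto)
    then have cs: "coord_sum u = u 1" by simp
    have ueq: "(\<lambda>i. u 1 * \<e> 1 i) = u" using e by (auto simp: fun_eq_iff unitvec_def)
    show ?thesis unfolding cs ueq by (rule less.prems(1))
  next
    case False
    have "{i. u i \<noteq> 0 \<and> i \<noteq> 1} \<noteq> {}"
    proof
      assume "{i. u i \<noteq> 0 \<and> i \<noteq> 1} = {}"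
      then have "card {i. u i \<noteq> 0 \<and> i \<noteq> 1} = 0" by (simp only: card.empty)
      then show False using False less.prems(2) by simp
    qed
    then obtain k where k: "u k \<noteq> 0" "k \<noteq> 1" by blast
    have k0: "k \<noteq> 0" using inZN[OF L(1) less.prems(1)] k unfolding ZN_def by (metis (mono_tags, lifting) mem_Collect_eq)
    define v where "v = (\<lambda>i. u i - u k * (\<e> k i - \<e> 1 i))"
    have vL: "v \<in> L" unfolding v_def by (rule step[OF L less.prems(1) k0 k(2)])
    have set: "{i. v i \<noteq> 0 \<and> i \<noteq> 1} = {i. u i \<noteq> 0 \<and> i \<noteq> 1} - {k}"
      by (auto simp: v_def unitvec_def)
    have card: "card {i. v i \<noteq> 0 \<and> i \<noteq> 1} < n"
      unfolding set using less.prems(2) k fin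
      by (metis (mono_tags, lifting) False card_Diff1_less_iff card.infinite mem_Collect_eq)
    define S where "S = {i. u i \<noteq> 0} \<union> {1}"
    have finS: "finite S" using finite_supp[OF L(1) less.prems(1)] by (simp add: S_def)
    have kS: "k \<in> S" "1 \<in> S" using k by (auto simp: S_def)
    have cu: "coord_sum u = sum u S" by (rule coord_sum_eq[OF finS]) (auto simp: S_def)
    have cv: "coord_sum v = sum v S"
      by (rule coord_sum_eq[OF finS]) (auto simp: S_def v_def unitvec_def split: if_splits)
    have "sum v S = sum u S - u k * (sum (\<e> k) S - sum (\<e> 1) S)"
      unfolding v_def by (simp add: sum_subtractf sum_distrib_left right_diff_distrib)
    also have "sum (\<e> k) S = 1" using finS kS unfolding unitvec_def
      by (simp add: sum.delta)
    also have "sum (\<e> 1) S = 1" using finS kS unfolding unitvec_def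
      by (simp add: sum.delta)
    finally have "coord_sum v = coord_sum u" using cu cv by simp
    with less.IH[OF card vL refl] show ?thesis by simp
  qed
qed

lemma sum_e1: "coord_sum (\<lambda>i. c * \<e> 1 i) = c"
proof -
  have "coord_sum (\<lambda>i. c * \<e> 1 i) = sum (\<lambda>i. c * \<e> 1 i) {1}"
    by (rule coord_sum_eq) (auto simp: unitvec_def split: if_splits)
  then show ?thesis by (simp add: unitvec_def)
qed

theorem corollary4p7:
  fixes L :: "(nat \<Rightarrow> int) set"
  assumes "lattice L" and "Sym_invariant L"
  shows "(\<lambda>i. s_lat L * \<e> 1 i) \<in> L \<and>
    ((\<exists>u\<in>L. coord_sum u \<noteq> 0) \<longrightarrow> (\<lambda>i. s_lat L * \<e> 1 i) \<in> graver_basis L)"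
proof -
  define M where "M = {c. (\<lambda>i. c * \<e> 1 i) \<in> L}"
  have AM: "coord_sum ` L = M"
  proof
    show "coord_sum ` L \<subseteq> M"
    proof
      fix x assume "x \<in> coord_sum ` L"
      then obtain u where u: "u \<in> L" "x = coord_sum u" by blast
      show "x \<in> M" unfolding M_def u(2) using main_ind[OF assms u(1) refl] by simp
    qed
    show "M \<subseteq> coord_sum ` L"
    proof
      fix c assume "c \<in> M"
      then have c: "(\<lambda>i. c * \<e> 1 i) \<in> L" unfolding M_def by simp
      have "c = coord_sum (\<lambda>i. c * \<e> 1 i)" by (simp only: sum_e1)
      then show "c \<in> coord_sum ` L" using c by (rule image_eqI)
    qed
  qed
  have M0: "0 \<in> M" using lat_zero[OF assms(1)] unfolding M_def by simp
  have Madd: "a + b \<in> M" if "a \<in> M" "b \<in> M" for a b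
  proof -
    have "(\<lambda>i. (\<lambda>i. a * \<e> 1 i) i + (\<lambda>i. b * \<e> 1 i) i) \<in> L"
      using that lat_add[OF assms(1)] unfolding M_def by simp
    then show ?thesis unfolding M_def by (simp add: distrib_right)
  qed
  have Mneg: "- a \<in> M" if "a \<in> M" for a
  proof -
    have "(\<lambda>i. - (\<lambda>i. a * \<e> 1 i) i) \<in> L"
      using that lat_neg[OF assms(1)] unfolding M_def by simp
    then show ?thesis unfolding M_def by simp
  qed
  have Mnat: "int n * a \<in> M" if "a \<in> M" for a n
    by (induction n) (auto simp: M0 distrib_right intro: Madd that)
  have Mmul: "c * a \<in> M" if "a \<in> M" for a c
  proof (cases "c \<ge> 0")
    case True then show ?thesis using Mnat[OF that, of "nat c"] by simp
  next
    case False then show ?thesis using Mneg[OF Mnat[OF that, of "nat (- c)"]] by simp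
  qed
  have sL: "s_lat L = Gcd M" unfolding s_lat_def AM ..
  show ?thesis
  proof (cases "\<exists>u\<in>L. coord_sum u \<noteq> 0")
    case False
    then have "M \<subseteq> {0}" using AM by auto
    then have "Gcd M = 0" by (simp add: Gcd_0_iff)
    then have "s_lat L = 0" using sL by simp
    then show ?thesis using False lat_zero[OF assms(1)] by simp
  next
    case True
    then obtain a where a: "a \<in> M" "a \<noteq> 0" using AM by auto
    have "\<exists>p. p \<in> M \<and> p > 0"
    proof (cases "a > 0")
      case True then show ?thesis using a by blast
    next
      case False then have "- a > 0" using a by simp
      then show ?thesis using Mneg[OF a(1)] by blast
    qed
    define d where "d = (LEAST p. p \<in> M \<and> p > 0)"
    obtain p0 where p0: "p0 \<in> M" "p0 > 0" using \<open>\<exists>p. p \<in> M \<and> p > 0\<close> by blast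
    have dM: "d \<in> M \<and> d > 0" and dmin: "\<And>q. q \<in> M \<Longrightarrow> q > 0 \<Longrightarrow> d \<le> q"
    proof -
      let ?n = "LEAST n::nat. int n \<in> M \<and> int n > 0"
      have ex: "int (nat p0) \<in> M \<and> int (nat p0) > 0" using p0 by simp
      have n: "int ?n \<in> M \<and> int ?n > 0" by (rule LeastI[where P="\<lambda>n::nat. int n \<in> M \<and> int n > 0", OF ex])
      have nmin: "int ?n \<le> q" if "q \<in> M" "q > 0" for q
        using Least_le[of "\<lambda>n::nat. int n \<in> M \<and> int n > 0" "nat q"] that by simp
      have "d = int ?n"
        unfolding d_def by (rule Least_equality) (use n nmin in auto)
      then show "d \<in> M \<and> d > 0" "\<And>q. q \<in> M \<Longrightarrow> q > 0 \<Longrightarrow> d \<le> q" using n nmin by auto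
    qed
    have ddvd: "d dvd b" if "b \<in> M" for b
    proof -
      have "b mod d = b + (- (b div d) * d)" by (simp add: mod_div_mult_eq[symmetric] algebra_simps)
      moreover have "b + (- (b div d) * d) \<in> M" using Madd[OF that Mmul[OF dM[THEN conjunct1]]] .
      ultimately have bm: "b mod d \<in> M" by (simp only:)
      have lt: "b mod d < d" "b mod d \<ge> 0" using dM by auto
      have "b mod d = 0"
      proof (rule ccontr)
        assume "b mod d \<noteq> 0"
        then have "b mod d > 0" using lt(2) by simp
        from dmin[OF bm this] show False using lt(1) by simp
      qed
      then show ?thesis by (simp add: dvd_eq_mod_eq_0)
    qed
    have gd: "Gcd M = d"
      by (rule Gcd_eqI) (use dM ddvd in auto)
    have mem: "(\<lambda>i. d * \<e> 1 i) \<in> L" using dM unfolding M_def by simp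
    have gb: "(\<lambda>i. d * \<e> 1 i) \<in> graver_basis L"
      unfolding graver_basis_def
    proof (intro CollectI conjI ballI impI)
      show "(\<lambda>i. d * \<e> 1 i) \<in> L - {\<lambda>_. 0}" using mem dM by (auto simp: fun_eq_iff unitvec_def)
      fix v assume v: "v \<in> L - {\<lambda>_. 0}" and le: "v \<sqsubseteq> (\<lambda>i. d * \<e> 1 i)"
      have vi: "v i = 0" if "i \<noteq> 1" for i
      proof -
        have "\<bar>v i\<bar> \<le> \<bar>d * \<e> 1 i\<bar>" using le unfolding conf_le_def by blast
        then show ?thesis using that by (simp add: unitvec_def)
      qed
      have "v 1 * (d * \<e> 1 1) \<ge> 0 \<and> \<bar>v 1\<bar> \<le> \<bar>d * \<e> 1 1\<bar>" using le unfolding conf_le_def by blast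
      then have "v 1 * d \<ge> 0" "\<bar>v 1\<bar> \<le> \<bar>d\<bar>" by (simp_all add: unitvec_def)
      then have r: "0 \<le> v 1" "v 1 \<le> d" using dM by (auto simp: zero_le_mult_iff)
      have veq: "(\<lambda>i. v 1 * \<e> 1 i) = v" using vi by (auto simp: fun_eq_iff unitvec_def)
      have "v 1 \<noteq> 0"
      proof
        assume "v 1 = 0"
        then have "v = (\<lambda>_. 0)" using vi by (metis One_nat_def)
        then show False using v by simp
      qed
      moreover have "v 1 \<in> M"
      proof -
        have "(\<lambda>i. v 1 * \<e> 1 i) \<in> L" using v by (simp only: veq Diff_iff)
        then show ?thesis unfolding M_def by simp
      qed
      ultimately have "d \<le> v 1" using dmin r by auto
      then have "v 1 = d" using r by simp
      then show "v = (\<lambda>i. d * \<e> 1 i)" using veq by simp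
    qed
    show ?thesis using mem gb unfolding sL gd by simp
  qed
qed

end
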